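(* Let $A\subset\mathbb R$ be an open interval of length $R>2$ and let $\psi:A\to\mathbb C$ be a regular $\mathbb C$-supershift on $A$. Let $0<\delta<R-2$, let $\theta$ be a smooth function on $\mathbb R$ with support in $[0,\delta]$, and let $A_\delta=\{a\in A:\ a-\delta\in A\}$. Then the function $$(\psi*\theta)(a)=\int_0^\delta\theta(\alpha)\,\psi(a-\alpha)\,d\alpha,\qquad a\in A_\delta,$$ is smooth and is a regular $\mathbb C$-supershift on $A_\delta$.
   Context: For an open interval $A\subset\mathbb R$ of length $R>2$ (possibly infinite), set $\mathbb A=\{(a,a')\in\mathbb R\times A:\ a'+[-1,1]\subset A,\ a+a'\in A\}$. For a sequence $\boldsymbol\epsilon=(\epsilon_N)_{N\ge1}$ with $\epsilon_N\in[0,1)$ and $\epsilon_N\to0$, put $h^{\boldsymbol\epsilon}_{N,\nu}=1-2\,\frac{\nu+\epsilon_N(N-\nu)}{N}$ for $0\le\nu\le N$. For a continuous $\psi:A\to\mathbb C$ and $(a,a')\in\mathbb A$ set $$S_N^{\boldsymbol\epsilon}[\psi](a,a')=\sum_{\nu=0}^N\binom N\nu\Big(\frac{1+a}2\Big)^{N-\nu}\Big(\frac{1-a}2\Big)^{\nu}\psi\big(a'+h^{\boldsymbol\epsilon}_{N,\nu}\big).$$ A continuous $\psi:A\to\mathbb C$ is called a regular $\mathbb C$-supershift on $A$ if (1) for every such sequence $\boldsymbol\epsilon$, $S_N^{\boldsymbol\epsilon}[\psi](a,a')\to\psi(a+a')$ as $N\to\infty$ uniformly on compact subsets of $\mathbb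 A$; and (2) for every family $\{\boldsymbol\epsilon_{\iota'}=(\epsilon_{\iota',N})_{N\ge1}:\iota'\in I'\}$ of such sequences with $\sup_{\iota'\in I'}\epsilon_{\iota',N}\to0$ as $N\to\infty$, the convergence in (1) is uniform with respect to $\iota'\in I'$ on each compact subset of $\mathbb A$. *)

theory Defs
  imports "HOL-Analysis.Analysis"
begin

definition ointerval :: "ereal \<Rightarrow> ereal \<Rightarrow> real set" where
  "ointerval lo hi = {x. lo < ereal x \<and> ereal x < hi}"

definition dom_A :: "real set \<Rightarrow> (real \<times> real) set" where
  "dom_A A = {(a, a'). a' \<in> A \<and> {a' - 1 .. a' + 1} \<subseteq> A \<and> a + a' \<in> A}"

definition admissible_seq :: "(nat \<Rightarrow> real) \<Rightarrow> bool" where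
  "admissible_seq e \<longleftrightarrow> (\<forall>N\<ge>1. 0 \<le> e N \<and> e N < 1) \<and> e \<longlonglongrightarrow> 0"

definition h_eps :: "(nat \<Rightarrow> real) \<Rightarrow> nat \<Rightarrow> nat \<Rightarrow> real" where
  "h_eps e N \<nu> = 1 - 2 * ((real \<nu> + e N * (real N - real \<nu>)) / real N)"

definition S_eps :: "(nat \<Rightarrow> real) \<Rightarrow> (real \<Rightarrow> complex) \<Rightarrow> nat \<Rightarrow> real \<times> real \<Rightarrow> complex" where
  "S_eps e \<psi> N p = (case p of (a, a') \<Rightarrow>
     (\<Sum>\<nu>=0..N. complex_of_real (real (N choose \<nu>) * ((1 + a) / 2) ^ (N - \<nu>) * ((1 - a) / 2) ^ \<nu>)
        * \<psi> (a' + h_eps e N \<nu>)))"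

definition regular_supershift :: "real set \<Rightarrow> (real \<Rightarrow> complex) \<Rightarrow> bool" where
  "regular_supershift A \<psi> \<longleftrightarrow>
     continuous_on A \<psi> \<and>
     (\<forall>e. admissible_seq e \<longrightarrow>
        (\<forall>K. compact K \<and> K \<subseteq> dom_A A \<longrightarrow>
           uniform_limit K (\<lambda>N p. S_eps e \<psi> N p) (\<lambda>p. \<psi> (fst p + snd p)) sequentially)) \<and>
     (\<forall>E :: (nat \<Rightarrow> real) set.
        (\<forall>e\<in>E. admissible_seq e) \<and>
        (\<forall>\<eta>>0. \<forall>\<^sub>F N in sequentially. \<forall>e\<in>E. e N < \<eta>) \<longrightarrow>
        (\<forall>K. compact K \<and> K \<subseteq> dom_A A \<longrightarrow>
           (\<forall>\<eta>>0. \<forall>\<^sub>F N in sequentially. \<forall>e\<in>E. \<forall>p\<in>K.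
               dist (S_eps e \<psi> N p) (\<psi> (fst p + snd p)) < \<eta>)))"

definition smooth_on :: "real set \<Rightarrow> (real \<Rightarrow> 'a::real_normed_vector) \<Rightarrow> bool" where
  "smooth_on S f \<longleftrightarrow> (\<exists>D :: nat \<Rightarrow> real \<Rightarrow> 'a. (\<forall>x\<in>S. D 0 x = f x) \<and>
      (\<forall>n. \<forall>x\<in>S. (D n has_vector_derivative D (Suc n) x) (at x)))"

end

theory Submission imports Defs begin

lemma oi_between:
  assumes "x \<in> ointerval lo hi" "y \<in> ointerval lo hi" "x \<le> z" "z \<le> y"
  shows "z \<in> ointerval lo hi"
proof -
  have 1: "ereal x \<le> ereal z" "ereal z \<le> ereal y" using assms by auto
  have "lo < ereal x" "ereal y < hi" using assms by (auto simp: ointerval_def)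
  then have "lo < ereal z" "ereal z < hi"
    using 1 less_le_trans le_less_trans by blast+
  then show ?thesis unfolding ointerval_def by simp
qed

lemma oi_open: "open (ointerval lo hi)"
proof (rule openI)
  fix x assume x: "x \<in> ointerval lo hi"
  then have "lo < ereal x" "ereal x < hi" by (auto simp: ointerval_def)
  then obtain c d where c: "lo < ereal c" "ereal c < ereal x" and d: "ereal x < ereal d" "ereal d < hi"
    using ereal_dense2 by metis
  have "ereal c < hi" "lo < ereal d" using c d less_trans by blast+
  then have cd: "c \<in> ointerval lo hi" "d \<in> ointerval lo hi" using c d
    by (auto simp: ointerval_def)
  show "\<exists>e>0. ball x e \<subseteq> ointerval lo hi"
  proof (intro exI conjI)
    show "0 < min (x - c) (d - x)" using c d by auto
    show "ball x (min (x - c) (d - x)) \<subseteq> ointerval lo hi"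
    proof
      fix y assume "y \<in> ball x (min (x - c) (d - x))"
      then have "c \<le> y" "y \<le> d" by (auto simp: dist_real_def)
      then show "y \<in> ointerval lo hi" using oi_between[OF cd] by blast
    qed
  qed
qed

lemma oi_shift:
  assumes "0 < \<delta>"
  shows "{a \<in> ointerval lo hi. a - \<delta> \<in> ointerval lo hi} = ointerval (lo + ereal \<delta>) hi"
proof -
  have "lo < ereal (a - \<delta>) \<and> ereal (a - \<delta>) < hi \<and> lo < ereal a \<and> ereal a < hi
        \<longleftrightarrow> lo + ereal \<delta> < ereal a \<and> ereal a < hi" for a
    using assms by (cases lo; cases hi) auto
  then show ?thesis unfolding ointerval_def by blast
qed

lemma zero_outside:
  fixes Dt :: "nat \<Rightarrow> real \<Rightarrow> real"
  assumes d: "\<And>n x. (Dt n has_vector_derivative Dt (Suc n) x) (at x)"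
    and z: "\<And>x. x \<notin> {0..\<delta>} \<Longrightarrow> Dt 0 x = 0"
  shows "x \<le> 0 \<or> x \<ge> \<delta> \<Longrightarrow> Dt n x = 0"
proof -
  have d': "(Dt n has_real_derivative Dt (Suc n) x) (at x)" for n x
    using d has_real_derivative_iff_has_vector_derivative by blast
  have cont: "continuous_on UNIV (Dt n)" for n
    using d' by (simp add: continuous_on_eq_continuous_at DERIV_isCont[OF d'])
  have open_part: "\<forall>x. x < 0 \<or> x > \<delta> \<longrightarrow> Dt n x = 0" for n
  proof (induction n)
    case 0 then show ?case using z by auto
  next
    case (Suc n)
    show ?case
    proof (intro allI impI)
      fix x assume x: "x < 0 \<or> x > \<delta>"
      have "((\<lambda>_. 0) has_real_derivative 0) (at x)" by simp
      then have "(Dt n has_real_derivative 0) (at x)"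
        by (rule has_field_derivative_transform_within_open[where S="{..<0} \<union> {\<delta><..}"])
           (use x Suc in auto)
      then show "Dt (Suc n) x = 0" using d' DERIV_unique by blast
    qed
  qed
  have cl: "closed {x. Dt n x = 0}" for n
    using cont[of n] by (intro closed_Collect_eq) (auto intro: continuous_on_const)
  have "closure {..<0} \<subseteq> {x. Dt n x = 0}" "closure {\<delta><..} \<subseteq> {x. Dt n x = 0}"
    by (intro closure_minimal cl; use open_part in auto)+
  then show "x \<le> 0 \<or> x \<ge> \<delta> \<Longrightarrow> Dt n x = 0"
    by (auto simp: closure_lessThan closure_greaterThan)
qed


lemma conv_rep:
  fixes \<psi> :: "real \<Rightarrow> complex" and g :: "real \<Rightarrow> real"
  assumes btw: "\<And>x y z. x \<in> A \<Longrightarrow> y \<in> A \<Longrightarrow> x \<le> z \<Longrightarrow> z \<le> y \<Longrightarrow> z \<in> A"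
    and cA: "c \<in> A" and dA: "d \<in> A" and ca: "c \<le> a - \<delta>" and ad: "a \<le> d"
    and cpsi: "continuous_on A \<psi>" and cg: "continuous_on UNIV g"
    and gz: "\<And>x. x \<le> 0 \<or> x \<ge> \<delta> \<Longrightarrow> g x = 0"
  shows "integral {0..\<delta>} (\<lambda>\<alpha>. complex_of_real (g \<alpha>) * \<psi> (a - \<alpha>))
       = integral {c..d} (\<lambda>t. complex_of_real (g (a - t)) * \<psi> t)"
proof -
  define f where "f = (\<lambda>t. complex_of_real (g (a - t)) * \<psi> t)"
  have 1: "integral {0..\<delta>} (\<lambda>\<alpha>. complex_of_real (g \<alpha>) * \<psi> (a - \<alpha>)) = integral {a-\<delta>..a} f"
  proof -
    have "integral {0..\<delta>} (\<lambda>x. f (a - x)) = integral {-\<delta>..0} (\<lambda>x. f (a + x))"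
      using Henstock_Kurzweil_Integration.integral_reflect_real[of 0 "-\<delta>" "\<lambda>x. f (a + x)"] by simp
    also have "integral {-\<delta>..0} (\<lambda>x. f (a + x)) = integral {-\<delta>..0} (f \<circ> (+) a)"
      by (simp add: o_def)
    also have "\<dots> = integral {-\<delta>+a..0+a} f" by (rule integral_shift_Icc_real)
    finally show ?thesis by (simp add: f_def add.commute)
  qed
  have sub: "{a-\<delta>..a} \<subseteq> A" using btw[OF cA dA] ca ad by auto
  have "continuous_on {a-\<delta>..a} f" unfolding f_def
    by (intro continuous_on_mult continuous_on_of_real continuous_on_compose2[OF cg]
        continuous_on_subset[OF cpsi sub] continuous_intros) auto
  then have "(f has_integral integral {a-\<delta>..a} f) {a-\<delta>..a}"
    using integrable_continuous_interval by blast
  then have "(f has_integral integral {a-\<delta>..a} f) {c..d}"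
    by (rule has_integral_on_superset) (use ca ad gz in \<open>auto simp: f_def\<close>)
  then show ?thesis using 1 by (simp add: integral_unique f_def)
qed


lemma conv_deriv:
  fixes \<psi> :: "real \<Rightarrow> complex" and Dt :: "nat \<Rightarrow> real \<Rightarrow> real"
  assumes btw: "\<And>x y z. x \<in> A \<Longrightarrow> y \<in> A \<Longrightarrow> x \<le> z \<Longrightarrow> z \<le> y \<Longrightarrow> z \<in> A"
    and oA: "open A"
    and xA: "x \<in> A" and xdA: "x - \<delta> \<in> A"
    and cpsi: "continuous_on A \<psi>"
    and d: "\<And>n x. (Dt n has_vector_derivative Dt (Suc n) x) (at x)"
    and gz: "\<And>n x. x \<le> 0 \<or> x \<ge> \<delta> \<Longrightarrow> Dt n x = 0"
  shows "((\<lambda>a. integral {0..\<delta>} (\<lambda>\<alpha>. complex_of_real (Dt n \<alpha>) * \<psi> (a - \<alpha>))) has_vector_derivative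
           integral {0..\<delta>} (\<lambda>\<alpha>. complex_of_real (Dt (Suc n) \<alpha>) * \<psi> (x - \<alpha>))) (at x)"
proof -
  have d': "(Dt n has_real_derivative Dt (Suc n) x) (at x)" for n x
    using d has_real_derivative_iff_has_vector_derivative by blast
  have cont: "continuous_on UNIV (Dt n)" for n
    using d' by (simp add: continuous_on_eq_continuous_at DERIV_isCont[OF d'])
  obtain e1 where e1: "e1 > 0" "ball (x - \<delta>) e1 \<subseteq> A" using oA xdA openE by blast
  obtain e2 where e2: "e2 > 0" "ball x e2 \<subseteq> A" using oA xA openE by blast
  define c where "c = x - \<delta> - e1/2"
  define d where "d = x + e2/2"
  have cA: "c \<in> A" using e1 by (auto simp: c_def dist_real_def intro!: subsetD[OF e1(2)])
  have dA: "d \<in> A" using e2 by (auto simp: d_def dist_real_def intro!: subsetD[OF e2(2)])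
  define U where "U = {c + \<delta> <..< d}"
  have xU: "x \<in> U" using e1 e2 by (auto simp: U_def c_def d_def)
  have oU: "open U" "convex U" by (auto simp: U_def)
  have rep: "integral {0..\<delta>} (\<lambda>\<alpha>. complex_of_real (Dt m \<alpha>) * \<psi> (a - \<alpha>))
       = integral (cbox c d) (\<lambda>t. complex_of_real (Dt m (a - t)) * \<psi> t)" if "a \<in> U" for a m
    using conv_rep[where a=a and g="Dt m", OF btw cA dA _ _ cpsi cont gz] that by (auto simp: U_def)
  have cd: "cbox c d \<subseteq> A" using btw[OF cA dA] by auto
  have "((\<lambda>a. integral (cbox c d) (\<lambda>t. complex_of_real (Dt n (a - t)) * \<psi> t)) has_vector_derivative
          integral (cbox c d) (\<lambda>t. complex_of_real (Dt (Suc n) (x - t)) * \<psi> t)) (at x within U)"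
  proof (rule leibniz_rule_vector_derivative[OF _ _ _ xU oU(2)])
    fix a t
    have "((\<lambda>a. Dt n (a - t)) has_real_derivative Dt (Suc n) (a - t) * 1) (at a within U)"
      by (intro DERIV_chain2[OF d'] derivative_eq_intros) auto
    then show "((\<lambda>a. complex_of_real (Dt n (a - t)) * \<psi> t) has_vector_derivative
          complex_of_real (Dt (Suc n) (a - t)) * \<psi> t) (at a within U)"
      by (auto intro!: has_vector_derivative_mult_left has_vector_derivative_of_real)
  next
    fix a assume "a \<in> U"
    show "(\<lambda>t. complex_of_real (Dt n (a - t)) * \<psi> t) integrable_on cbox c d"
      by (intro integrable_continuous continuous_on_mult continuous_on_of_real
          continuous_on_compose2[OF cont] continuous_on_subset[OF cpsi cd] continuous_intros) auto
  next
    have "continuous_on (U \<times> cbox c d) (\<lambda>p. complex_of_real (Dt (Suc n) (fst p - snd p)) * \<psi> (snd p))"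
      by (intro continuous_on_mult continuous_on_of_real continuous_on_compose2[OF cont]
          continuous_on_compose2[OF cpsi] continuous_intros) (use cd in auto)
    then show "continuous_on (U \<times> cbox c d) (\<lambda>(a, t). complex_of_real (Dt (Suc n) (a - t)) * \<psi> t)"
      by (simp add: case_prod_beta')
  qed
  then have "((\<lambda>a. integral (cbox c d) (\<lambda>t. complex_of_real (Dt n (a - t)) * \<psi> t)) has_vector_derivative
          integral (cbox c d) (\<lambda>t. complex_of_real (Dt (Suc n) (x - t)) * \<psi> t)) (at x)"
    using at_within_open[OF xU oU(1)] by simp
  then have "((\<lambda>a. integral {0..\<delta>} (\<lambda>\<alpha>. complex_of_real (Dt n \<alpha>) * \<psi> (a - \<alpha>))) has_vector_derivative
          integral (cbox c d) (\<lambda>t. complex_of_real (Dt (Suc n) (x - t)) * \<psi> t)) (at x)"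
    by (rule has_vector_derivative_transform_within_open[OF _ oU(1) xU]) (simp add: rep)
  then show ?thesis using rep[OF xU, of "Suc n"] by simp
qed


lemma h_bounds:
  assumes "N \<ge> 1" "0 \<le> e N" "e N < 1" "\<nu> \<le> N"
  shows "-1 \<le> h_eps e N \<nu> \<and> h_eps e N \<nu> \<le> 1"
proof -
  have N: "real N > 0" using assms by simp
  have "0 \<le> e N * (real N - real \<nu>)" using assms by simp
  moreover have "e N * (real N - real \<nu>) \<le> real N - real \<nu>"
    using assms by (intro mult_left_le_one_le) auto
  ultimately have "0 \<le> (real \<nu> + e N * (real N - real \<nu>)) / real N"
      "(real \<nu> + e N * (real N - real \<nu>)) / real N \<le> 1"
    using N by (auto simp: field_simps)
  then show ?thesis unfolding h_eps_def by linarith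
qed

lemma conv_cont:
  fixes \<psi> :: "real \<Rightarrow> complex" and \<theta> :: "real \<Rightarrow> real"
  assumes btw: "\<And>x y z. x \<in> A \<Longrightarrow> y \<in> A \<Longrightarrow> x \<le> z \<Longrightarrow> z \<le> y \<Longrightarrow> z \<in> A"
    and cpsi: "continuous_on A \<psi>" and ct: "continuous_on UNIV \<theta>"
    and y: "y \<in> A" "y - \<delta> \<in> A"
  shows "continuous_on {0..\<delta>} (\<lambda>\<alpha>. complex_of_real (\<theta> \<alpha>) * \<psi> (y - \<alpha>))"
proof -
  have "(\<lambda>\<alpha>. y - \<alpha>) ` {0..\<delta>} \<subseteq> A" using btw[OF y(2) y(1)] by auto
  then show ?thesis
    by (intro continuous_on_mult continuous_on_of_real continuous_on_subset[OF ct]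
        continuous_on_compose2[OF cpsi] continuous_intros) auto
qed

lemma conv_identity:
  fixes \<psi> :: "real \<Rightarrow> complex" and \<theta> :: "real \<Rightarrow> real"
  assumes btw: "\<And>x y z. x \<in> A \<Longrightarrow> y \<in> A \<Longrightarrow> x \<le> z \<Longrightarrow> z \<le> y \<Longrightarrow> z \<in> A"
    and cpsi: "continuous_on A \<psi>" and ct: "continuous_on UNIV \<theta>"
    and F: "F = (\<lambda>a. integral {0..\<delta>} (\<lambda>\<alpha>. complex_of_real (\<theta> \<alpha>) * \<psi> (a - \<alpha>)))"
    and hS: "\<And>\<nu>. \<nu> \<le> N \<Longrightarrow> a' + h_eps e N \<nu> \<in> A \<and> a' + h_eps e N \<nu> - \<delta> \<in> A"
    and aS: "a + a' \<in> A" "a + a' - \<delta> \<in> A"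
  shows "S_eps e F N (a, a') - F (a + a')
     = integral {0..\<delta>} (\<lambda>\<alpha>. complex_of_real (\<theta> \<alpha>) *
          (S_eps e \<psi> N (a, a' - \<alpha>) - \<psi> (a + (a' - \<alpha>))))"
proof -
  define c where "c = (\<lambda>\<nu>. complex_of_real (real (N choose \<nu>) * ((1 + a) / 2) ^ (N - \<nu>) * ((1 - a) / 2) ^ \<nu>))"
  have int1: "(\<lambda>\<alpha>. complex_of_real (\<theta> \<alpha>) * \<psi> (y - \<alpha>)) integrable_on {0..\<delta>}"
    if "y \<in> A" "y - \<delta> \<in> A" for y
    by (rule integrable_continuous_interval, rule conv_cont[OF _ cpsi ct that], erule (3) btw)
  have "S_eps e F N (a, a') = (\<Sum>\<nu>=0..N. c \<nu> * F (a' + h_eps e N \<nu>))"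
    by (simp add: S_eps_def c_def)
  also have "\<dots> = (\<Sum>\<nu>=0..N. integral {0..\<delta>} (\<lambda>\<alpha>. c \<nu> * (complex_of_real (\<theta> \<alpha>) * \<psi> (a' + h_eps e N \<nu> - \<alpha>))))"
    by (simp add: F)
  also have "\<dots> = integral {0..\<delta>} (\<lambda>\<alpha>. \<Sum>\<nu>=0..N. c \<nu> * (complex_of_real (\<theta> \<alpha>) * \<psi> (a' + h_eps e N \<nu> - \<alpha>)))"
    by (rule integral_sum[symmetric]) (use hS int1 in \<open>auto intro!: integrable_on_mult_right int1\<close>)
  also have "\<dots> = integral {0..\<delta>} (\<lambda>\<alpha>. complex_of_real (\<theta> \<alpha>) * S_eps e \<psi> N (a, a' - \<alpha>))"
    by (simp add: S_eps_def c_def sum_distrib_left algebra_simps)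
  finally have 1: "S_eps e F N (a, a') = \<dots>" .
  have 2: "(\<lambda>\<alpha>. complex_of_real (\<theta> \<alpha>) * S_eps e \<psi> N (a, a' - \<alpha>)) integrable_on {0..\<delta>}"
  proof -
    have "(\<lambda>\<alpha>. \<Sum>\<nu>=0..N. c \<nu> * (complex_of_real (\<theta> \<alpha>) * \<psi> (a' + h_eps e N \<nu> - \<alpha>))) integrable_on {0..\<delta>}"
      by (intro integrable_sum) (use hS int1 in \<open>auto intro!: integrable_on_mult_right int1\<close>)
    then show ?thesis by (simp add: S_eps_def c_def sum_distrib_left algebra_simps)
  qed
  have 3: "F (a + a') = integral {0..\<delta>} (\<lambda>\<alpha>. complex_of_real (\<theta> \<alpha>) * \<psi> (a + (a' - \<alpha>)))"
    by (simp add: F algebra_simps)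
  have 4: "(\<lambda>\<alpha>. complex_of_real (\<theta> \<alpha>) * \<psi> (a + (a' - \<alpha>))) integrable_on {0..\<delta>}"
    using int1[OF aS] by (simp add: algebra_simps)
  show ?thesis unfolding 1 3 integral_diff[OF 2 4, symmetric]
    by (simp add: algebra_simps)
qed


lemma conv_core:
  fixes \<psi> :: "real \<Rightarrow> complex" and \<theta> :: "real \<Rightarrow> real"
  assumes btw: "\<And>x y z. x \<in> A \<Longrightarrow> y \<in> A \<Longrightarrow> x \<le> z \<Longrightarrow> z \<le> y \<Longrightarrow> z \<in> A"
    and cpsi: "continuous_on A \<psi>" and ct: "continuous_on UNIV \<theta>"
    and F: "F = (\<lambda>a. integral {0..\<delta>} (\<lambda>\<alpha>. complex_of_real (\<theta> \<alpha>) * \<psi> (a - \<alpha>)))"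
    and dpos: "0 < \<delta>"
    and Sdef: "\<And>y. y \<in> S \<longleftrightarrow> y \<in> A \<and> y - \<delta> \<in> A"
    and reg: "regular_supershift A \<psi>"
    and E: "\<forall>e\<in>E. admissible_seq e" "\<forall>\<eta>>0. \<forall>\<^sub>F N in sequentially. \<forall>e\<in>E. e N < \<eta>"
    and K: "compact K" "K \<subseteq> dom_A S"
    and eta: "\<eta> > 0"
  shows "\<forall>\<^sub>F N in sequentially. \<forall>e\<in>E. \<forall>p\<in>K. dist (S_eps e F N p) (F (fst p + snd p)) < \<eta>"
proof -
  have sub: "y - \<alpha> \<in> A" if "y \<in> S" "0 \<le> \<alpha>" "\<alpha> \<le> \<delta>" for y \<alpha>
    using that Sdef[of y] btw[of "y - \<delta>" y "y - \<alpha>"] by auto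
  have sub2: "x \<in> A" if "y \<in> S" "y - \<delta> \<le> x" "x \<le> y" for x y
    using sub[of y "y - x"] that by auto
  define K' where "K' = (\<lambda>q. (fst (fst q), snd (fst q) - snd q)) ` (K \<times> {0..\<delta>})"
  have cK': "compact K'" unfolding K'_def
    by (intro compact_continuous_image compact_Times K(1) compact_Icc continuous_intros)
  have K'A: "K' \<subseteq> dom_A A"
  proof
    fix q assume "q \<in> K'"
    then obtain a a' \<alpha> where q: "q = (a, a' - \<alpha>)" and p: "(a, a') \<in> K" and al: "0 \<le> \<alpha>" "\<alpha> \<le> \<delta>"
      unfolding K'_def by auto
    have p': "a' \<in> S" "{a' - 1 .. a' + 1} \<subseteq> S" "a + a' \<in> S" using p K(2) by (auto simp: dom_A_def)
    have "a' - \<alpha> \<in> A" using sub[OF p'(1) al] .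
    moreover have "{a' - \<alpha> - 1 .. a' - \<alpha> + 1} \<subseteq> A"
    proof
      fix t assume "t \<in> {a' - \<alpha> - 1 .. a' - \<alpha> + 1}"
      then have "t + \<alpha> \<in> S" using p'(2) by auto
      from sub[OF this al] show "t \<in> A" by simp
    qed
    moreover have "a + (a' - \<alpha>) \<in> A" using sub[OF p'(3) al] by (simp add: algebra_simps)
    ultimately show "q \<in> dom_A A" by (simp add: q dom_A_def)
  qed
  have "bounded (\<theta> ` {0..\<delta>})"
    by (intro compact_imp_bounded compact_continuous_image continuous_on_subset[OF ct]) auto
  then obtain M where M: "M > 0" "\<And>\<alpha>. \<alpha> \<in> {0..\<delta>} \<Longrightarrow> \<bar>\<theta> \<alpha>\<bar> \<le> M"
    unfolding bounded_pos by auto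
  define \<eta>' where "\<eta>' = \<eta> / (2 * M * \<delta>)"
  have eta': "\<eta>' > 0" using M dpos eta by (simp add: \<eta>'_def)
  from reg have "\<forall>\<^sub>F N in sequentially. \<forall>e\<in>E. \<forall>q\<in>K'.
               dist (S_eps e \<psi> N q) (\<psi> (fst q + snd q)) < \<eta>'"
    unfolding regular_supershift_def using E cK' K'A eta' by blast
  moreover have "\<forall>\<^sub>F N in sequentially. N \<ge> (1::nat)" by (rule eventually_ge_at_top)
  ultimately show ?thesis
  proof eventually_elim
    case (elim N)
    show ?case
    proof (intro ballI)
      fix e p assume e: "e \<in> E" and pK: "p \<in> K"
      obtain a a' where pp: "p = (a, a')" by (cases p)
      have p': "a' \<in> S" "{a' - 1 .. a' + 1} \<subseteq> S" "a + a' \<in> S"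
        using pK K(2) by (auto simp: dom_A_def pp)
      have eN: "0 \<le> e N" "e N < 1" using E(1) e elim(2) by (auto simp: admissible_seq_def)
      have hS: "a' + h_eps e N \<nu> \<in> S" if "\<nu> \<le> N" for \<nu>
        using h_bounds[where e=e, OF elim(2) eN that] p'(2) by auto
      have id: "S_eps e F N (a, a') - F (a + a')
         = integral {0..\<delta>} (\<lambda>\<alpha>. complex_of_real (\<theta> \<alpha>) *
          (S_eps e \<psi> N (a, a' - \<alpha>) - \<psi> (a + (a' - \<alpha>))))"
        by (rule conv_identity[OF btw cpsi ct F]) (use hS p'(3) Sdef in auto)
      have cS: "continuous_on {0..\<delta>} (\<lambda>\<alpha>. S_eps e \<psi> N (a, a' - \<alpha>))"
      proof -
        have "continuous_on {0..\<delta>} (\<lambda>\<alpha>. \<psi> (a' + h_eps e N \<nu> - \<alpha>))" if "\<nu> \<in> {0..N}" for \<nu>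
        proof (intro continuous_on_compose2[OF cpsi] continuous_intros subsetI)
          fix x assume "x \<in> (\<lambda>\<alpha>. a' + h_eps e N \<nu> - \<alpha>) ` {0..\<delta>}"
          then have x: "a' + h_eps e N \<nu> - \<delta> \<le> x" "x \<le> a' + h_eps e N \<nu>" by auto
          have "(a' + h_eps e N \<nu>) - ((a' + h_eps e N \<nu>) - x) \<in> A"
            by (rule sub) (use hS that x in auto)
          then show "x \<in> A" by simp
        qed
        then have "continuous_on {0..\<delta>} (\<lambda>\<alpha>. \<Sum>\<nu>=0..N. complex_of_real (real (N choose \<nu>) * ((1 + a) / 2) ^ (N - \<nu>) * ((1 - a) / 2) ^ \<nu>)
        * \<psi> (a' + h_eps e N \<nu> - \<alpha>))"
          by (intro continuous_on_sum continuous_on_mult continuous_on_const) auto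
        then show ?thesis by (simp add: S_eps_def algebra_simps)
      qed
      have cI: "continuous_on {0..\<delta>} (\<lambda>\<alpha>. complex_of_real (\<theta> \<alpha>) *
          (S_eps e \<psi> N (a, a' - \<alpha>) - \<psi> (a + (a' - \<alpha>))))"
        by (intro continuous_on_mult continuous_on_of_real continuous_on_subset[OF ct] continuous_on_diff cS
            continuous_on_compose2[OF cpsi] continuous_intros)
           (use p'(3) in \<open>auto simp: algebra_simps intro: sub2\<close>)
      have bd: "norm (complex_of_real (\<theta> \<alpha>) * (S_eps e \<psi> N (a, a' - \<alpha>) - \<psi> (a + (a' - \<alpha>)))) \<le> M * \<eta>'"
        if al: "\<alpha> \<in> {0..\<delta>}" for \<alpha>
      proof -
        have "(a, a' - \<alpha>) \<in> K'" unfolding K'_def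
          by (rule rev_image_eqI[where x="((a, a'), \<alpha>)"]) (use pK pp al in auto)
        then have "norm (S_eps e \<psi> N (a, a' - \<alpha>) - \<psi> (a + (a' - \<alpha>))) < \<eta>'"
          using elim(1) e by (fastforce simp: dist_norm)
        then show ?thesis
          using M(2)[OF al] by (auto simp: norm_mult intro!: mult_mono)
      qed
      have "norm (S_eps e F N (a, a') - F (a + a')) \<le> M * \<eta>' * (\<delta> - 0)"
        unfolding id by (rule integral_bound) (use dpos cI bd in auto)
      also have "\<dots> < \<eta>" using M dpos eta by (simp add: \<eta>'_def)
      finally show "dist (S_eps e F N p) (F (fst p + snd p)) < \<eta>" by (simp add: pp dist_norm)
    qed
  qed
qed


theorem mainTheorem4:
  fixes lo hi :: ereal and \<psi> :: "real \<Rightarrow> complex" and \<theta> :: "real \<Rightarrow> real" and \<delta> :: real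
  assumes "hi - lo > 2"
    and "regular_supershift (ointerval lo hi) \<psi>"
    and "0 < \<delta>" and "ereal \<delta> < hi - lo - 2"
    and "smooth_on UNIV \<theta>"
    and "\<forall>x. x \<notin> {0..\<delta>} \<longrightarrow> \<theta> x = 0"
  shows "smooth_on {a \<in> ointerval lo hi. a - \<delta> \<in> ointerval lo hi}
           (\<lambda>a. integral {0..\<delta>} (\<lambda>\<alpha>. complex_of_real (\<theta> \<alpha>) * \<psi> (a - \<alpha>)))
       \<and> regular_supershift {a \<in> ointerval lo hi. a - \<delta> \<in> ointerval lo hi}
           (\<lambda>a. integral {0..\<delta>} (\<lambda>\<alpha>. complex_of_real (\<theta> \<alpha>) * \<psi> (a - \<alpha>)))"
proof -
  define A where "A = ointerval lo hi"
  define S where "S = {a \<in> A. a - \<delta> \<in> A}"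
  define F where "F = (\<lambda>a. integral {0..\<delta>} (\<lambda>\<alpha>. complex_of_real (\<theta> \<alpha>) * \<psi> (a - \<alpha>)))"
  note reg = assms(2)[folded A_def]
  have btw: "\<And>x y z. x \<in> A \<Longrightarrow> y \<in> A \<Longrightarrow> x \<le> z \<Longrightarrow> z \<le> y \<Longrightarrow> z \<in> A"
    unfolding A_def by (rule oi_between)
  have oA: "open A" unfolding A_def by (rule oi_open)
  have oS: "open S" unfolding S_def A_def oi_shift[OF assms(3)] by (rule oi_open)
  have Sdef: "\<And>y. y \<in> S \<longleftrightarrow> y \<in> A \<and> y - \<delta> \<in> A" by (simp add: S_def)
  have cpsi: "continuous_on A \<psi>" using reg by (simp add: regular_supershift_def)
  obtain Dt :: "nat \<Rightarrow> real \<Rightarrow> real" where Dt0: "\<And>x. Dt 0 x = \<theta> x"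
    and d: "\<And>n x. (Dt n has_vector_derivative Dt (Suc n) x) (at x)"
    using assms(5) unfolding smooth_on_def by auto
  have gz: "\<And>n x. x \<le> 0 \<or> x \<ge> \<delta> \<Longrightarrow> Dt n x = 0"
    by (rule zero_outside[where Dt=Dt, OF d]) (use assms(6) Dt0 in auto)
  have ct: "continuous_on UNIV \<theta>"
  proof -
    have "continuous_on UNIV (Dt 0)"
      using d by (intro continuous_on_vector_derivative) (auto intro: has_vector_derivative_at_within)
    then show ?thesis using Dt0 by (simp add: fun_eq_iff[symmetric])
  qed
  define D where "D = (\<lambda>n a. integral {0..\<delta>} (\<lambda>\<alpha>. complex_of_real (Dt n \<alpha>) * \<psi> (a - \<alpha>)))"
  have D0: "D 0 = F" by (simp add: D_def F_def Dt0)
  have dD: "(D n has_vector_derivative D (Suc n) x) (at x)" if "x \<in> S" for n x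
    unfolding D_def
    by (rule conv_deriv[where Dt=Dt, OF btw oA _ _ cpsi d gz]) (use that Sdef in auto)
  have smooth: "smooth_on S F"
    unfolding smooth_on_def using D0 dD by (intro exI[of _ D]) auto
  have cF: "continuous_on S F"
    unfolding continuous_on_eq_continuous_at[OF oS]
    using dD[of _ 0] unfolding D0 by (blast intro: has_vector_derivative_continuous)
  have core: "\<forall>\<^sub>F N in sequentially. \<forall>e\<in>E. \<forall>p\<in>K. dist (S_eps e F N p) (F (fst p + snd p)) < \<eta>"
    if "\<forall>e\<in>E. admissible_seq e" "\<forall>\<eta>>0. \<forall>\<^sub>F N in sequentially. \<forall>e\<in>E. e N < \<eta>"
       "compact K" "K \<subseteq> dom_A S" "\<eta> > 0" for E K \<eta>
    by (rule conv_core[OF btw cpsi ct F_def assms(3) Sdef reg that])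
  have p2: "\<forall>e. admissible_seq e \<longrightarrow>
        (\<forall>K. compact K \<and> K \<subseteq> dom_A S \<longrightarrow>
           uniform_limit K (\<lambda>N p. S_eps e F N p) (\<lambda>p. F (fst p + snd p)) sequentially)"
  proof (intro allI impI)
    fix e :: "nat \<Rightarrow> real" and K assume e: "admissible_seq e" and K: "compact K \<and> K \<subseteq> dom_A S"
    have "\<forall>\<eta>>0. \<forall>\<^sub>F N in sequentially. \<forall>e'\<in>{e}. e' N < \<eta>"
      using e by (auto simp: admissible_seq_def intro: order_tendstoD(2))
    then show "uniform_limit K (\<lambda>N p. S_eps e F N p) (\<lambda>p. F (fst p + snd p)) sequentially"
      unfolding uniform_limit_iff using core[of "{e}" K] e K by auto
  qed
  have p3: "\<forall>E :: (nat \<Rightarrow> real) set.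
        (\<forall>e\<in>E. admissible_seq e) \<and>
        (\<forall>\<eta>>0. \<forall>\<^sub>F N in sequentially. \<forall>e\<in>E. e N < \<eta>) \<longrightarrow>
        (\<forall>K. compact K \<and> K \<subseteq> dom_A S \<longrightarrow>
           (\<forall>\<eta>>0. \<forall>\<^sub>F N in sequentially. \<forall>e\<in>E. \<forall>p\<in>K.
               dist (S_eps e F N p) (F (fst p + snd p)) < \<eta>))"
    using core by blast
  have "regular_supershift S F"
    unfolding regular_supershift_def using cF p2 p3 by blast
  then show ?thesis using smooth unfolding S_def A_def F_def by simp
qed

end
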